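(* Let $r,s,q$ be positive integers. There is a constant $c=c(r,s,q)>0$ such that the following holds. Let $V$ be a set of $N$ vertices and let $\gamma$ be a function assigning to every $r$-element subset $f\subset V$ a vector $\gamma(f)\in\mathbb{R}^s$. Suppose that for every $r$-element subset $f\subset V$ there are at most $q$ $r$-element subsets $f'\subset V$ with $|f\cap f'|=r-1$ such that $|\gamma(f)_i-\gamma(f')_i|<1$ for some $i\in[s]$. Then there is $U\subset V$ with $|U|\ge cN^{1/(2r-1)}$ such that $|\gamma(f)_i-\gamma(f')_i|\ge 1$ for every pair of distinct $r$-element subsets $f,f'\subset U$ and every $i\in[s]$. *)

theory Defs
  imports Complex_Main
begin

end

theory Submission
  imports Defs
begin


lemma double_count:
  assumes "finite A" "finite B"
  shows "(\<Sum>x\<in>A. card {y\<in>B. R x y}) = (\<Sum>y\<in>B. card {x\<in>A. R x y})"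
proof -
  have "(\<Sum>x\<in>A. card {y\<in>B. R x y}) = (\<Sum>x\<in>A. \<Sum>y\<in>B. if R x y then 1 else 0)"
    using assms by (simp add: sum.If_cases Int_def conj_commute)
  also have "\<dots> = (\<Sum>y\<in>B. \<Sum>x\<in>A. if R x y then 1 else 0)" by (rule sum.swap)
  also have "\<dots> = (\<Sum>y\<in>B. card {x\<in>A. R x y})"
    using assms by (simp add: sum.If_cases Int_def conj_commute)
  finally show ?thesis .
qed

lemma count_supsets:
  assumes "finite V" "A \<subseteq> V" "card A \<le> m"
  shows "card {W. W \<subseteq> V \<and> card W = m \<and> A \<subseteq> W} = (card V - card A) choose (m - card A)"
proof -
  have fA: "finite A" using assms finite_subset by blast
  have "bij_betw (\<lambda>W. W - A) {W. W \<subseteq> V \<and> card W = m \<and> A \<subseteq> W} {B. B \<subseteq> V - A \<and> card B = m - card A}"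
  proof (rule bij_betw_byWitness[where f'="\<lambda>B. B \<union> A"])
    show "(\<lambda>W. W - A) ` {W. W \<subseteq> V \<and> card W = m \<and> A \<subseteq> W} \<subseteq> {B. B \<subseteq> V - A \<and> card B = m - card A}"
      using fA by (auto simp: card_Diff_subset)
    show "(\<lambda>B. B \<union> A) ` {B. B \<subseteq> V - A \<and> card B = m - card A} \<subseteq> {W. W \<subseteq> V \<and> card W = m \<and> A \<subseteq> W}"
    proof
      fix W assume "W \<in> (\<lambda>B. B \<union> A) ` {B. B \<subseteq> V - A \<and> card B = m - card A}"
      then obtain B where B: "B \<in> {B. B \<subseteq> V - A \<and> card B = m - card A}" and W: "W = B \<union> A" by auto
      then have "finite B" using assms finite_subset by blast
      moreover have "B \<inter> A = {}" using B by auto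
      ultimately have "card (B \<union> A) = card B + card A" using fA card_Un_disjoint by blast
      then show "W \<in> {W. W \<subseteq> V \<and> card W = m \<and> A \<subseteq> W}" using B assms W by auto
    qed
  qed auto
  then have "card {W. W \<subseteq> V \<and> card W = m \<and> A \<subseteq> W} = card {B. B \<subseteq> V - A \<and> card B = m - card A}"
    by (rule bij_betw_same_card)
  also have "\<dots> = card (V - A) choose (m - card A)" using assms by (simp add: n_subsets)
  also have "card (V - A) = card V - card A" using assms fA by (simp add: card_Diff_subset)
  finally show ?thesis .
qed

lemma count_supsets0:
  assumes "finite V" "A \<subseteq> V" "card A > m"
  shows "card {W. W \<subseteq> V \<and> card W = m \<and> A \<subseteq> W} = 0"
proof -
  have "{W. W \<subseteq> V \<and> card W = m \<and> A \<subseteq> W} = {}"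
    using assms by (auto dest: card_mono[OF finite_subset])
  then show ?thesis by (metis card.empty)
qed

lemma binom_ratio:
  fixes n k a :: nat
  assumes "k \<le> n"
  shows "(n + Suc a) * (n choose k) \<le> (k + Suc a) * (Suc n choose Suc k)"
proof -
  have e: "Suc n * (n choose k) = (Suc n choose Suc k) * Suc k" by (rule Suc_times_binomial_eq)
  have "(n choose k) \<le> (Suc n choose Suc k)"
  proof -
    have "Suc k * (n choose k) \<le> Suc n * (n choose k)" using assms by simp
    also have "\<dots> = Suc k * (Suc n choose Suc k)" using e by simp
    finally show ?thesis by simp
  qed
  then have "a * (n choose k) \<le> a * (Suc n choose Suc k)" by simp
  moreover have "Suc n * (n choose k) = Suc k * (Suc n choose Suc k)" using e by (simp add: mult.commute)
  ultimately show ?thesis by (simp add: algebra_simps)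
qed

lemma supsets_ratio:
  assumes "finite V" "A \<subseteq> V" "x \<in> V" "x \<notin> A" "m \<le> card V"
  shows "card V * card {W. W \<subseteq> V \<and> card W = m \<and> insert x A \<subseteq> W}
         \<le> m * card {W. W \<subseteq> V \<and> card W = m \<and> A \<subseteq> W}"
proof (cases "card (insert x A) \<le> m")
  case False
  have "card {W. W \<subseteq> V \<and> card W = m \<and> insert x A \<subseteq> W} = 0"
    by (rule count_supsets0) (use assms False in auto)
  then show ?thesis by simp
next
  case True
  have fA: "finite A" using assms finite_subset by blast
  have ci: "card (insert x A) = Suc (card A)" using fA assms by simp
  have cV: "card (insert x A) \<le> card V" using assms by (intro card_mono) auto
  define n where "n = card V - Suc (card A)"
  define k where "k = m - Suc (card A)"
  have kn: "k \<le> n" using True ci assms unfolding n_def k_def by simp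
  have V: "card V = n + Suc (card A)" using cV ci unfolding n_def by simp
  have m: "m = k + Suc (card A)" using True ci unfolding k_def by simp
  have 1: "card {W. W \<subseteq> V \<and> card W = m \<and> insert x A \<subseteq> W} = n choose k"
    using count_supsets[of V "insert x A" m] assms True ci unfolding n_def k_def by simp
  have 2: "card {W. W \<subseteq> V \<and> card W = m \<and> A \<subseteq> W} = Suc n choose Suc k"
    using count_supsets[of V A m] assms True ci V m by simp
  have "card V * (n choose k) \<le> m * (Suc n choose Suc k)"
    unfolding V m using binom_ratio[OF kn, of "card A"] by (simp add: algebra_simps)
  then show ?thesis by (simp only: 1 2)
qed

lemma averaging:
  fixes h :: "'a \<Rightarrow> real"
  assumes "finite A" "A \<noteq> {}"
  shows "\<exists>x\<in>A. h x * card A \<le> sum h A"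
proof (rule ccontr)
  assume "\<not> ?thesis"
  then have "\<forall>x\<in>A. sum h A < h x * card A" by auto
  then have "(\<Sum>x\<in>A. sum h A) < (\<Sum>x\<in>A. h x * card A)"
    using assms by (intro sum_strict_mono) auto
  then show False by (simp add: sum_distrib_right mult.commute)
qed



lemma class_bound:
  fixes \<gamma> :: "nat set \<Rightarrow> nat \<Rightarrow> real"
  assumes fV: "finite V"
    and H: "\<forall>f. f \<subseteq> V \<and> card f = r \<longrightarrow>
         card {f'. f' \<subseteq> V \<and> card f' = r \<and> card (f \<inter> f') = r - 1 \<and>
                   (\<exists>i<s. \<bar>\<gamma> f i - \<gamma> f' i\<bar> < 1)} \<le> q"
    and r: "r > 0" and i: "i < s" and T: "card T = r - 1"
  shows "card {f'. f' \<subseteq> V \<and> card f' = r \<and> T \<subseteq> f' \<and> \<lfloor>\<gamma> f' i\<rfloor> = k} \<le> q + 1"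
proof (cases "{f'. f' \<subseteq> V \<and> card f' = r \<and> T \<subseteq> f' \<and> \<lfloor>\<gamma> f' i\<rfloor> = k} = {}")
  case True
  show ?thesis using True by (metis card.empty zero_le)
next
  case False
  let ?C = "{f'. f' \<subseteq> V \<and> card f' = r \<and> T \<subseteq> f' \<and> \<lfloor>\<gamma> f' i\<rfloor> = k}"
  let ?A = "\<lambda>f. {f'. f' \<subseteq> V \<and> card f' = r \<and> card (f \<inter> f') = r - 1 \<and>
                   (\<exists>i<s. \<bar>\<gamma> f i - \<gamma> f' i\<bar> < 1)}"
  obtain f0 where f0: "f0 \<in> ?C" using False by blast
  have fin: "finite ?C" by (rule finite_subset[of _ "Pow V"]) (use fV in auto)
  have sub: "?C - {f0} \<subseteq> ?A f0"
  proof
    fix f' assume f': "f' \<in> ?C - {f0}"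
    have ff0: "finite f0" using f0 fV finite_subset by blast
    have ff': "finite f'" using f' fV finite_subset by blast
    have "T \<subseteq> f0 \<inter> f'" using f0 f' by auto
    then have c1: "r - 1 \<le> card (f0 \<inter> f')" using T ff0 by (metis card_mono finite_Int)
    have "f0 \<inter> f' \<noteq> f0"
    proof
      assume "f0 \<inter> f' = f0"
      then have "f0 \<subseteq> f'" by auto
      moreover have "card f0 = card f'" using f0 f' by auto
      ultimately have "f0 = f'" using card_subset_eq[OF ff'] by blast
      then show False using f' by auto
    qed
    then have "card (f0 \<inter> f') < card f0" using ff0 by (meson Int_lower1 psubsetI psubset_card_mono)
    then have c2: "card (f0 \<inter> f') = r - 1" using c1 f0 by auto
    have fe: "\<lfloor>\<gamma> f0 i\<rfloor> = \<lfloor>\<gamma> f' i\<rfloor>" using f0 f' by auto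
    have "\<bar>\<gamma> f0 i - \<gamma> f' i\<bar> < 1"
      using of_int_floor_le[of "\<gamma> f0 i"] of_int_floor_le[of "\<gamma> f' i"]
        real_of_int_floor_add_one_gt[of "\<gamma> f0 i"] real_of_int_floor_add_one_gt[of "\<gamma> f' i"] fe
      by linarith
    then show "f' \<in> ?A f0" using f' c2 i by auto
  qed
  have "card ?C \<le> card (?C - {f0}) + 1" using fin f0 by (simp add: card_Diff_singleton)
  also have "card (?C - {f0}) \<le> card (?A f0)"
    by (rule card_mono[OF finite_subset[of _ "Pow V"] sub]) (use fV in auto)
  also have "card (?A f0) \<le> q" using H f0 by auto
  finally show ?thesis by simp
qed

lemma fiber_bound:
  fixes \<gamma> :: "nat set \<Rightarrow> nat \<Rightarrow> real"
  assumes fV: "finite V"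
    and H: "\<forall>f. f \<subseteq> V \<and> card f = r \<longrightarrow>
         card {f'. f' \<subseteq> V \<and> card f' = r \<and> card (f \<inter> f') = r - 1 \<and>
                   (\<exists>i<s. \<bar>\<gamma> f i - \<gamma> f' i\<bar> < 1)} \<le> q"
    and r: "r > 0" and T: "card T = r - 1"
  shows "card {f'. f' \<subseteq> V \<and> card f' = r \<and> T \<subseteq> f' \<and> (\<exists>i<s. \<bar>\<gamma> f i - \<gamma> f' i\<bar> < 1)} \<le> 3 * s * (q + 1)"
proof -
  let ?C = "\<lambda>i k. {f'. f' \<subseteq> V \<and> card f' = r \<and> T \<subseteq> f' \<and> \<lfloor>\<gamma> f' i\<rfloor> = k}"
  let ?K = "\<lambda>i. {\<lfloor>\<gamma> f i\<rfloor> - 1 .. \<lfloor>\<gamma> f i\<rfloor> + 1}"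
  have sub: "{f'. f' \<subseteq> V \<and> card f' = r \<and> T \<subseteq> f' \<and> (\<exists>i<s. \<bar>\<gamma> f i - \<gamma> f' i\<bar> < 1)}
      \<subseteq> (\<Union>i\<in>{..<s}. \<Union>k\<in>?K i. ?C i k)"
  proof
    fix f' assume "f' \<in> {f'. f' \<subseteq> V \<and> card f' = r \<and> T \<subseteq> f' \<and> (\<exists>i<s. \<bar>\<gamma> f i - \<gamma> f' i\<bar> < 1)}"
    then obtain i where f': "f' \<subseteq> V" "card f' = r" "T \<subseteq> f'" "i < s" "\<bar>\<gamma> f i - \<gamma> f' i\<bar> < 1" by auto
    have a: "\<lfloor>\<gamma> f' i\<rfloor> \<le> \<lfloor>\<gamma> f i + 1\<rfloor>" using f'(5) by (intro floor_mono) linarith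
    have b: "\<lfloor>\<gamma> f i\<rfloor> \<le> \<lfloor>\<gamma> f' i + 1\<rfloor>" using f'(5) by (intro floor_mono) linarith
    have "\<lfloor>\<gamma> f' i\<rfloor> \<in> ?K i" using a b by simp
    then show "f' \<in> (\<Union>i\<in>{..<s}. \<Union>k\<in>?K i. ?C i k)" using f' by blast
  qed
  have "card {f'. f' \<subseteq> V \<and> card f' = r \<and> T \<subseteq> f' \<and> (\<exists>i<s. \<bar>\<gamma> f i - \<gamma> f' i\<bar> < 1)}
      \<le> card (\<Union>i\<in>{..<s}. \<Union>k\<in>?K i. ?C i k)"
    by (rule card_mono[OF finite_subset[of _ "Pow V"] sub]) (use fV in auto)
  also have "\<dots> \<le> (\<Sum>i\<in>{..<s}. card (\<Union>k\<in>?K i. ?C i k))" by (rule card_UN_le) simp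
  also have "\<dots> \<le> (\<Sum>i\<in>{..<s}. 3 * (q + 1))"
  proof (rule sum_mono)
    fix i assume i: "i \<in> {..<s}"
    have "card (\<Union>k\<in>?K i. ?C i k) \<le> (\<Sum>k\<in>?K i. card (?C i k))" by (rule card_UN_le) simp
    also have "\<dots> \<le> (\<Sum>k\<in>?K i. q + 1)"
      by (rule sum_mono, rule class_bound[OF fV H r _ T]) (use i in auto)
    also have "\<dots> = 3 * (q + 1)" by simp
    finally show "card (\<Union>k\<in>?K i. ?C i k) \<le> 3 * (q + 1)" .
  qed
  also have "\<dots> = 3 * s * (q + 1)" by (simp add: algebra_simps)
  finally show ?thesis .
qed



lemma averaging_nat:
  fixes h :: "'a \<Rightarrow> nat"
  assumes "finite A" "A \<noteq> {}"
  shows "\<exists>x\<in>A. h x * card A \<le> sum h A"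
proof (rule ccontr)
  assume "\<not> ?thesis"
  then have "\<forall>x\<in>A. sum h A < h x * card A" by auto
  then have "(\<Sum>x\<in>A. sum h A) < (\<Sum>x\<in>A. h x * card A)"
    using assms by (intro sum_strict_mono) auto
  moreover have "(\<Sum>x\<in>A. h x * card A) = sum h A * card A" by (simp add: sum_distrib_right)
  moreover have "(\<Sum>x\<in>A. sum h A) = card A * sum h A" by simp
  ultimately show False by (simp add: mult.commute)
qed

lemma choose_le_pow: "(n choose k) \<le> n ^ k"
  by (cases "k \<le> n") (auto simp: binomial_le_pow binomial_eq_0)

lemma main_comb:
  fixes \<gamma> :: "nat set \<Rightarrow> nat \<Rightarrow> real"
  assumes fV: "finite V"
    and H: "\<forall>f. f \<subseteq> V \<and> card f = r \<longrightarrow>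
         card {f'. f' \<subseteq> V \<and> card f' = r \<and> card (f \<inter> f') = r - 1 \<and>
                   (\<exists>i<s. \<bar>\<gamma> f i - \<gamma> f' i\<bar> < 1)} \<le> q"
    and r: "r > 0" and mN: "m \<le> card V"
  defines "B \<equiv> {(f, f'). f \<subseteq> V \<and> card f = r \<and> f' \<subseteq> V \<and> card f' = r \<and> f \<noteq> f' \<and>
                   (\<exists>i<s. \<bar>\<gamma> f i - \<gamma> f' i\<bar> < 1)}"
  shows "\<exists>W. W \<subseteq> V \<and> card W = m \<and>
           card V * card {p\<in>B. fst p \<union> snd p \<subseteq> W} \<le> 3 * s * (q + 1) * m ^ (2 * r)"
proof -
  define Wm where "Wm = {W. W \<subseteq> V \<and> card W = m}"
  define n where "n A = card {W\<in>Wm. A \<subseteq> W}" for A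
  define P where "P = {f. f \<subseteq> V \<and> card f = r} \<times> {T. T \<subseteq> V \<and> card T = r - 1}"
  define pick where "pick p = (SOME x. x \<in> snd p - fst p)" for p :: "nat set \<times> nat set"
  define g where "g p = (fst p, snd p - {pick p})" for p
  have finPow: "finite (Pow V)" using fV by simp
  have finWm: "finite Wm" unfolding Wm_def by (rule finite_subset[OF _ finPow]) auto
  have finB: "finite B" unfolding B_def by (rule finite_subset[of _ "Pow V \<times> Pow V"]) (use fV in auto)
  have finP: "finite P" unfolding P_def by (rule finite_subset[of _ "Pow V \<times> Pow V"]) (use fV in auto)
  have Wm_ne: "Wm \<noteq> {}"
  proof -
    obtain W where "W \<subseteq> V" "card W = m" using obtain_subset_with_card_n[OF mN] by metis
    then show ?thesis unfolding Wm_def by auto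
  qed
  have pickB: "pick p \<in> snd p - fst p" if "p \<in> B" for p
  proof -
    obtain f f' where p: "p = (f, f')" by (cases p)
    have "f' - f \<noteq> {}"
    proof
      assume "f' - f = {}"
      then have "f' \<subseteq> f" by auto
      moreover have "finite f" using that fV finite_subset unfolding p B_def by auto
      moreover have "card f' = card f" using that unfolding p B_def by auto
      ultimately have "f' = f" using card_subset_eq by blast
      then show False using that unfolding p B_def by auto
    qed
    then have ex: "\<exists>x. x \<in> f' - f" by blast
    have "(SOME x. x \<in> f' - f) \<in> f' - f" by (rule someI_ex[OF ex])
    then show ?thesis unfolding pick_def p by simp
  qed
  have S1: "(\<Sum>W\<in>Wm. card {p\<in>B. fst p \<union> snd p \<subseteq> W}) = (\<Sum>p\<in>B. n (fst p \<union> snd p))"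
    unfolding n_def by (rule double_count[OF finWm finB])
  have S2: "card V * n (fst p \<union> snd p) \<le> m * n (fst (g p) \<union> snd (g p))" if p: "p \<in> B" for p
  proof -
    have pk: "pick p \<in> snd p" "pick p \<notin> fst p" using pickB[OF p] by auto
    have e: "fst p \<union> snd p = insert (pick p) (fst (g p) \<union> snd (g p))" using pk unfolding g_def by auto
    have sub: "fst (g p) \<union> snd (g p) \<subseteq> V" using p unfolding g_def B_def by auto
    have "pick p \<in> V" using p pk unfolding B_def by auto
    moreover have "pick p \<notin> fst (g p) \<union> snd (g p)" using pk unfolding g_def by auto
    ultimately have "card V * card {W. W \<subseteq> V \<and> card W = m \<and> insert (pick p) (fst (g p) \<union> snd (g p)) \<subseteq> W}
         \<le> m * card {W. W \<subseteq> V \<and> card W = m \<and> (fst (g p) \<union> snd (g p)) \<subseteq> W}"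
      using supsets_ratio[OF fV sub _ _ mN] by blast
    moreover have "\<And>A. n A = card {W. W \<subseteq> V \<and> card W = m \<and> A \<subseteq> W}"
      unfolding n_def Wm_def by (simp add: conj_assoc)
    ultimately show ?thesis unfolding e by simp
  qed
  have fib: "card {p\<in>B. g p = y} \<le> 3 * s * (q + 1)" if y: "y \<in> g ` B" for y
  proof -
    obtain p0 where p0: "p0 \<in> B" "y = g p0" using y by auto
    define f where "f = fst y"
    define T where "T = snd y"
    have "snd p0 \<subseteq> V" using p0 unfolding B_def by auto
    then have fsnd: "finite (snd p0)" using fV by (rule finite_subset)
    have cT: "card T = r - 1" unfolding T_def p0(2) g_def using pickB[OF p0(1)] fsnd p0(1)
      unfolding B_def by (auto simp: card_Diff_singleton)
    have "{p\<in>B. g p = y} \<subseteq> (\<lambda>f'. (f, f')) ` {f'. f' \<subseteq> V \<and> card f' = r \<and> T \<subseteq> f' \<and> (\<exists>i<s. \<bar>\<gamma> f i - \<gamma> f' i\<bar> < 1)}"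
    proof
      fix p assume pp: "p \<in> {p\<in>B. g p = y}"
      obtain a b where ab: "p = (a, b)" by (cases p)
      have "a = f" "T = b - {pick p}" using pp unfolding f_def T_def g_def ab by auto
      then show "p \<in> (\<lambda>f'. (f, f')) ` {f'. f' \<subseteq> V \<and> card f' = r \<and> T \<subseteq> f' \<and> (\<exists>i<s. \<bar>\<gamma> f i - \<gamma> f' i\<bar> < 1)}"
        using pp unfolding ab B_def by auto
    qed
    then have "card {p\<in>B. g p = y} \<le> card ((\<lambda>f'. (f, f')) ` {f'. f' \<subseteq> V \<and> card f' = r \<and> T \<subseteq> f' \<and> (\<exists>i<s. \<bar>\<gamma> f i - \<gamma> f' i\<bar> < 1)})"
      by (rule card_mono[rotated]) (rule finite_imageI, rule finite_subset[OF _ finPow], auto)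
    also have "\<dots> \<le> card {f'. f' \<subseteq> V \<and> card f' = r \<and> T \<subseteq> f' \<and> (\<exists>i<s. \<bar>\<gamma> f i - \<gamma> f' i\<bar> < 1)}"
      by (rule card_image_le) (rule finite_subset[OF _ finPow], auto)
    also have "\<dots> \<le> 3 * s * (q + 1)" by (rule fiber_bound[OF fV H r cT])
    finally show ?thesis .
  qed
  have gP: "g ` B \<subseteq> P"
  proof
    fix y assume "y \<in> g ` B"
    then obtain p0 where p0: "p0 \<in> B" "y = g p0" by auto
    have "snd p0 \<subseteq> V" using p0 unfolding B_def by auto
    then have fsnd: "finite (snd p0)" using fV by (rule finite_subset)
    show "y \<in> P" unfolding P_def p0(2) g_def using pickB[OF p0(1)] fsnd p0(1)
      unfolding B_def by (auto simp: card_Diff_singleton)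
  qed
  have "card V * (\<Sum>p\<in>B. n (fst p \<union> snd p)) = (\<Sum>p\<in>B. card V * n (fst p \<union> snd p))"
    by (simp add: sum_distrib_left)
  also have "\<dots> \<le> (\<Sum>p\<in>B. m * n (fst (g p) \<union> snd (g p)))" by (rule sum_mono) (rule S2)
  also have "\<dots> = m * (\<Sum>p\<in>B. n (fst (g p) \<union> snd (g p)))" by (simp add: sum_distrib_left)
  also have "(\<Sum>p\<in>B. n (fst (g p) \<union> snd (g p))) = (\<Sum>y\<in>g ` B. \<Sum>p\<in>{p\<in>B. g p = y}. n (fst (g p) \<union> snd (g p)))"
    by (rule sum.image_gen[OF finB])
  also have "\<dots> = (\<Sum>y\<in>g ` B. card {p\<in>B. g p = y} * n (fst y \<union> snd y))"
    by (rule sum.cong) auto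
  also have "\<dots> \<le> (\<Sum>y\<in>g ` B. 3 * s * (q + 1) * n (fst y \<union> snd y))"
    by (rule sum_mono) (use fib in auto)
  also have "\<dots> \<le> (\<Sum>y\<in>P. 3 * s * (q + 1) * n (fst y \<union> snd y))"
    by (rule sum_mono2[OF finP gP]) auto
  also have "\<dots> = 3 * s * (q + 1) * (\<Sum>y\<in>P. n (fst y \<union> snd y))" by (simp add: sum_distrib_left)
  also have "(\<Sum>y\<in>P. n (fst y \<union> snd y)) = (\<Sum>W\<in>Wm. card {y\<in>P. fst y \<union> snd y \<subseteq> W})"
    unfolding n_def by (rule double_count[OF finP finWm, of "\<lambda>y W. fst y \<union> snd y \<subseteq> W"])
  also have "\<dots> \<le> (\<Sum>W\<in>Wm. m ^ (2 * r - 1))"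
  proof (rule sum_mono)
    fix W assume W: "W \<in> Wm"
    have fW: "finite W" using W fV finite_subset unfolding Wm_def by auto
    have "{y\<in>P. fst y \<union> snd y \<subseteq> W} = {f. f \<subseteq> W \<and> card f = r} \<times> {T. T \<subseteq> W \<and> card T = r - 1}"
      using W unfolding P_def Wm_def by auto
    then have "card {y\<in>P. fst y \<union> snd y \<subseteq> W} = (m choose r) * (m choose (r - 1))"
      using W fW unfolding Wm_def by (simp add: card_cartesian_product n_subsets)
    also have "\<dots> \<le> m ^ r * m ^ (r - 1)" by (intro mult_le_mono choose_le_pow)
    also have "\<dots> = m ^ (r + (r - 1))" by (simp only: power_add)
    also have "r + (r - 1) = 2 * r - 1" using r by simp
    finally show "card {y\<in>P. fst y \<union> snd y \<subseteq> W} \<le> m ^ (2 * r - 1)" .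
  qed
  also have "\<dots> = card Wm * m ^ (2 * r - 1)" by simp
  finally have S3: "card V * (\<Sum>p\<in>B. n (fst p \<union> snd p)) \<le> m * (3 * s * (q + 1) * (card Wm * m ^ (2 * r - 1)))"
    by (simp add: mult_le_mono)
  have mm: "m * m ^ (2 * r - 1) = m ^ (2 * r)" using r by (simp add: power_Suc[symmetric])
  have S3': "card V * (\<Sum>W\<in>Wm. card {p\<in>B. fst p \<union> snd p \<subseteq> W}) \<le> card Wm * (3 * s * (q + 1) * m ^ (2 * r))"
    using S3 unfolding S1 mm[symmetric] by (simp add: algebra_simps)
  obtain W where W: "W \<in> Wm" and Wle: "card {p\<in>B. fst p \<union> snd p \<subseteq> W} * card Wm \<le> (\<Sum>W\<in>Wm. card {p\<in>B. fst p \<union> snd p \<subseteq> W})"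
    using averaging_nat[OF finWm Wm_ne, of "\<lambda>W. card {p\<in>B. fst p \<union> snd p \<subseteq> W}"] by (elim bexE)
  have "card Wm * (card V * card {p\<in>B. fst p \<union> snd p \<subseteq> W}) \<le> card V * (\<Sum>W\<in>Wm. card {p\<in>B. fst p \<union> snd p \<subseteq> W})"
    using Wle by (simp add: algebra_simps)
  also have "\<dots> \<le> card Wm * (3 * s * (q + 1) * m ^ (2 * r))" by (rule S3')
  finally have "card V * card {p\<in>B. fst p \<union> snd p \<subseteq> W} \<le> 3 * s * (q + 1) * m ^ (2 * r)"
    using finWm Wm_ne by (simp add: card_gt_0_iff)
  then show ?thesis using W unfolding Wm_def by auto
qed



lemma get_U:
  fixes \<gamma> :: "nat set \<Rightarrow> nat \<Rightarrow> real"
  assumes fV: "finite V"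
    and H: "\<forall>f. f \<subseteq> V \<and> card f = r \<longrightarrow>
         card {f'. f' \<subseteq> V \<and> card f' = r \<and> card (f \<inter> f') = r - 1 \<and>
                   (\<exists>i<s. \<bar>\<gamma> f i - \<gamma> f' i\<bar> < 1)} \<le> q"
    and r: "r > 0" and mN: "m \<le> card V" and N0: "card V > 0"
    and big: "6 * s * (q + 1) * m ^ (2 * r - 1) \<le> card V"
  shows "\<exists>U. U \<subseteq> V \<and> m \<le> 2 * card U \<and>
         (\<forall>f f'. f \<subseteq> U \<and> card f = r \<and> f' \<subseteq> U \<and> card f' = r \<and> f \<noteq> f' \<longrightarrow>
            (\<forall>i<s. \<bar>\<gamma> f i - \<gamma> f' i\<bar> \<ge> 1))"
proof -
  define B where "B = {(f, f'). f \<subseteq> V \<and> card f = r \<and> f' \<subseteq> V \<and> card f' = r \<and> f \<noteq> f' \<and>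
                   (\<exists>i<s. \<bar>\<gamma> f i - \<gamma> f' i\<bar> < 1)}"
  obtain W where W: "W \<subseteq> V" "card W = m"
    and Wb: "card V * card {p\<in>B. fst p \<union> snd p \<subseteq> W} \<le> 3 * s * (q + 1) * m ^ (2 * r)"
    using main_comb[OF fV H r mN] unfolding B_def by blast
  define bad where "bad = {p\<in>B. fst p \<union> snd p \<subseteq> W}"
  define pick where "pick p = (SOME x. x \<in> snd p)" for p :: "nat set \<times> nat set"
  define U where "U = W - pick ` bad"
  have finB: "finite bad" unfolding bad_def B_def
    by (rule finite_subset[of _ "Pow V \<times> Pow V"]) (use fV in auto)
  have mm: "m * m ^ (2 * r - 1) = m ^ (2 * r)" using r by (simp add: power_Suc[symmetric])
  have "card V * (2 * card bad) \<le> 2 * (3 * s * (q + 1) * m ^ (2 * r))" using Wb unfolding bad_def by simp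
  also have "\<dots> = m * (6 * s * (q + 1) * m ^ (2 * r - 1))" unfolding mm[symmetric] by simp
  also have "\<dots> \<le> m * card V" using big by simp
  finally have "2 * card bad \<le> m" using N0 by (simp add: mult.commute)
  moreover have "card W - card (pick ` bad) \<le> card U"
    unfolding U_def by (rule diff_card_le_card_Diff) (use finB in simp)
  moreover have "card (pick ` bad) \<le> card bad" using finB by (rule card_image_le)
  ultimately have cU: "m \<le> 2 * card U" using W by linarith
  have propU: "\<forall>f f'. f \<subseteq> U \<and> card f = r \<and> f' \<subseteq> U \<and> card f' = r \<and> f \<noteq> f' \<longrightarrow>
            (\<forall>i<s. \<bar>\<gamma> f i - \<gamma> f' i\<bar> \<ge> 1)"
  proof (intro allI impI)
    fix f f' i
    assume a: "f \<subseteq> U \<and> card f = r \<and> f' \<subseteq> U \<and> card f' = r \<and> f \<noteq> f'"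
      and i: "i < s"
    show "1 \<le> \<bar>\<gamma> f i - \<gamma> f' i\<bar>"
    proof (rule ccontr)
    assume "\<not> 1 \<le> \<bar>\<gamma> f i - \<gamma> f' i\<bar>"
    then have b: "\<exists>i<s. \<bar>\<gamma> f i - \<gamma> f' i\<bar> < 1" using i by auto
    have UW: "U \<subseteq> W" unfolding U_def by auto
    have fW: "f \<subseteq> W" "f' \<subseteq> W" using a UW by auto
    then have fV': "f \<subseteq> V" "f' \<subseteq> V" using W by auto
    have "(f, f') \<in> B" unfolding B_def using a b fV' by simp
    then have "(f, f') \<in> bad" unfolding bad_def using fW by simp
    then have pb: "pick (f, f') \<in> pick ` bad" by blast
    have "f' \<noteq> {}" using a r by auto
    then have "pick (f, f') \<in> f'" unfolding pick_def by (simp add: some_in_eq)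
    then have "pick (f, f') \<in> U" using a by auto
    then show False using pb unfolding U_def by auto
    qed
  qed
  have UV: "U \<subseteq> V" using W unfolding U_def by auto
  show ?thesis by (rule exI[of _ U], intro conjI, fact UV, fact cU, fact propU)
qed



theorem lemma2p7:
  fixes r s q :: nat
  assumes "r > 0" and "s > 0" and "q > 0"
  shows "\<exists>c::real. c > 0 \<and>
    (\<forall>(V :: nat set) (\<gamma> :: nat set \<Rightarrow> nat \<Rightarrow> real).
      finite V \<longrightarrow>
      (\<forall>f. f \<subseteq> V \<and> card f = r \<longrightarrow>
         card {f'. f' \<subseteq> V \<and> card f' = r \<and> card (f \<inter> f') = r - 1 \<and>
                   (\<exists>i<s. \<bar>\<gamma> f i - \<gamma> f' i\<bar> < 1)} \<le> q) \<longrightarrow>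
      (\<exists>U. U \<subseteq> V \<and> real (card U) \<ge> c * real (card V) powr (1 / (2 * real r - 1)) \<and>
         (\<forall>f f'. f \<subseteq> U \<and> card f = r \<and> f' \<subseteq> U \<and> card f' = r \<and> f \<noteq> f' \<longrightarrow>
            (\<forall>i<s. \<bar>\<gamma> f i - \<gamma> f' i\<bar> \<ge> 1))))"
proof -
  have r: "r > 0" using assms by simp
  define D :: real where "D = real (6 * s * (q + 1))"
  define e :: real where "e = 1 / (2 * real r - 1)"
  define c :: real where "c = 1 / (4 * D)"
  have "1 \<le> 6 * s * (q + 1)" using assms by simp
  then have D1: "D \<ge> 1" unfolding D_def by (metis of_nat_1 of_nat_le_iff)
  have k: "real (2 * r - 1) = 2 * real r - 1" using r by (simp add: of_nat_diff)
  have e0: "e > 0" and e1: "e \<le> 1" unfolding e_def using r by auto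
  have ek: "e * real (2 * r - 1) = 1" unfolding e_def k using r by simp
  have Dpow: "D powr e \<le> D"
  proof -
    have "D powr e \<le> D powr 1" using D1 e1 by (intro powr_mono) auto
    then show ?thesis using D1 by simp
  qed
  have c0: "c > 0" unfolding c_def using D1 by simp
  show ?thesis
  proof (intro exI[of _ c] conjI allI impI)
    show "c > 0" by (rule c0)
    fix V :: "nat set" and \<gamma> :: "nat set \<Rightarrow> nat \<Rightarrow> real"
    assume fV: "finite V"
      and H: "\<forall>f. f \<subseteq> V \<and> card f = r \<longrightarrow>
         card {f'. f' \<subseteq> V \<and> card f' = r \<and> card (f \<inter> f') = r - 1 \<and>
                   (\<exists>i<s. \<bar>\<gamma> f i - \<gamma> f' i\<bar> < 1)} \<le> q"
    let ?P = "\<lambda>U. \<forall>f f'. f \<subseteq> U \<and> card f = r \<and> f' \<subseteq> U \<and> card f' = r \<and> f \<noteq> f' \<longrightarrow>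
            (\<forall>i<s. \<bar>\<gamma> f i - \<gamma> f' i\<bar> \<ge> 1)"
    show "\<exists>U. U \<subseteq> V \<and> real (card U) \<ge> c * real (card V) powr (1 / (2 * real r - 1)) \<and> ?P U"
    proof (cases "card V = 0")
      case True
      have "?P {}" using r by auto
      then show ?thesis using True by (intro exI[of _ "{}"]) auto
    next
      case False
      have Vpos: "card V > 0" using False by simp
      define N where "N = real (card V)"
      have N1: "N \<ge> 1" using False unfolding N_def by simp
      define y where "y = (N / D) powr e"
      have y0: "y > 0" unfolding y_def using N1 D1 by simp
      have Ny: "N powr e = y * D powr e" unfolding y_def using N1 D1 by (simp add: powr_divide)
      show ?thesis
      proof (cases "y < 2")
        case True
        obtain v where v: "v \<in> V" using False by fastforce
        have "?P {v}"
        proof (intro allI impI)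
          fix f f' i
          assume a: "f \<subseteq> {v} \<and> card f = r \<and> f' \<subseteq> {v} \<and> card f' = r \<and> f \<noteq> f'" and "i < s"
          then have "f = {v}" "f' = {v}" using r by (auto simp: subset_singleton_iff)
          then show "1 \<le> \<bar>\<gamma> f i - \<gamma> f' i\<bar>" using a by simp
        qed
        moreover have "c * N powr e \<le> 1"
        proof -
          have "N powr e \<le> 2 * D" unfolding Ny
            using True Dpow by (intro mult_mono) auto
          then show ?thesis unfolding c_def using D1 by (simp add: field_simps)
        qed
        ultimately show ?thesis using v unfolding N_def e_def
          by (intro exI[of _ "{v}"]) auto
      next
        case False
        define m where "m = nat \<lfloor>y\<rfloor>"
        have my: "real m \<le> y" "real m > y - 1" unfolding m_def using y0 by linarith+
        have m1: "m \<ge> 1" using my False by linarith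
        have "y ^ (2 * r - 1) = N / D"
        proof -
          have "y ^ (2 * r - 1) = y powr real (2 * r - 1)" using y0 by (simp add: powr_realpow)
          also have "\<dots> = (N / D) powr (e * real (2 * r - 1))" unfolding y_def by (simp add: powr_powr)
          also have "\<dots> = N / D" unfolding ek using N1 D1 by simp
          finally show ?thesis .
        qed
        then have "real m ^ (2 * r - 1) \<le> N / D" using my y0 by (metis power_mono of_nat_0_le_iff)
        then have big_r: "D * real m ^ (2 * r - 1) \<le> N" using D1 by (simp add: field_simps)
        then have big: "6 * s * (q + 1) * m ^ (2 * r - 1) \<le> card V"
          unfolding D_def N_def by (metis of_nat_le_iff of_nat_mult of_nat_power)
        have "m \<le> m ^ (2 * r - 1)" using m1 r by (simp add: self_le_power)
        also have "\<dots> \<le> 6 * s * (q + 1) * m ^ (2 * r - 1)" using assms by simp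
        finally have mN: "m \<le> card V" using big by linarith
        obtain U where U: "U \<subseteq> V" "m \<le> 2 * card U" "?P U"
          using get_U[OF fV H r mN Vpos big] by blast
        have "c * N powr e \<le> real (card U)"
        proof -
          have "c * N powr e = y * D powr e / (4 * D)" unfolding c_def Ny by simp
          also have "\<dots> \<le> y * D / (4 * D)"
            using Dpow y0 D1 by (intro divide_right_mono mult_left_mono) auto
          also have "\<dots> = y / 4" using D1 by simp
          also have "\<dots> \<le> real m / 2" using my False by linarith
          also have "\<dots> \<le> real (card U)" using U(2) by linarith
          finally show ?thesis .
        qed
        then have cU: "real (card U) \<ge> c * real (card V) powr (1 / (2 * real r - 1))"
          unfolding N_def e_def .
        show ?thesis by (rule exI[of _ U], intro conjI, fact U(1), fact cU, fact U(3))
      qed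
    qed
  qed
qed


end
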